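(* Let $p$ be a prime and let $G$ be a nontrivial finite $p$-group. Then $n_G=\exp(G)$ if and only if $G$ is cyclic, or $\exp(G)=p$, or $G$ is a dihedral $2$-group, i.e. $G\cong D_{2^{m+1}}=\langle x,y \mid x^{2^{m}}=y^2=1,\ x^y=x^{-1}\rangle$ for some integer $m\ge 1$.
   Context: For a finite group $G$ and $x\in G$, let $I_{\mathcal C}(x)=\{y\in G : \langle x,y\rangle \text{ is cyclic}\}$ (the closed neighborhood of $x$ in the enhanced power graph of $G$; it contains $1$ and $x$). For a nontrivial finite group $G$, $n_G=\max\{|I_{\mathcal C}(x)| : x\in G\setminus\{1\}\}$. $\exp(G)$ denotes the exponent of $G$. *)

theory Defs
  imports "HOL-Algebra.Algebra"
begin

text \<open>Closed neighbourhood of x in the enhanced power graph: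
  all y such that the subgroup generated by x and y is cyclic.\<close>
definition enh_nbhd :: "('a, 'b) monoid_scheme \<Rightarrow> 'a \<Rightarrow> 'a set" where
  "enh_nbhd G x = {y \<in> carrier G. cyclic_group (subgroup_generated G {x, y})}"

definition n_G :: "('a, 'b) monoid_scheme \<Rightarrow> nat" where
  "n_G G = Max ((\<lambda>x. card (enh_nbhd G x)) ` (carrier G - {\<one>\<^bsub>G\<^esub>}))"

definition group_exp :: "('a, 'b) monoid_scheme \<Rightarrow> nat" where
  "group_exp G = Lcm (group.ord G ` carrier G)"

text \<open>Dihedral group of order 2n: pairs (a,s) standing for x^a y^s,
  with 0 \<le> a < n, where y x y^-1 = x^-1.\<close>
definition dihedral_group :: "nat \<Rightarrow> (int \<times> bool) monoid" where
  "dihedral_group n =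
     \<lparr> carrier = {0..<int n} \<times> (UNIV :: bool set),
       monoid.mult = (\<lambda>(a, s) (b, t). ((if s then a - b else a + b) mod int n, s \<noteq> t)),
       monoid.one = (0, False) \<rparr>"

end

theory Submission
  imports Defs
begin


lemma funpow_mult_fix:
  assumes "(f ^^ d) a = a"
  shows "(f ^^ (d * q)) a = a"
proof (induction q)
  case 0 then show ?case by simp
next
  case (Suc q)
  have "(f ^^ (d * Suc q)) a = (f ^^ d) ((f ^^ (d * q)) a)"
    by (simp add: funpow_add)
  then show ?case using Suc assms by simp
qed

lemma funpow_mod_period:
  assumes "(f ^^ d) a = a"
  shows "(f ^^ n) a = (f ^^ (n mod d)) a"
proof -
  have "(f ^^ n) a = (f ^^ (n mod d + d * (n div d))) a" by (simp only: mod_mult_div_eq)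
  also have "\<dots> = (f ^^ (n mod d)) ((f ^^ (d * (n div d))) a)"
    by (simp only: funpow_add comp_apply)
  also have "\<dots> = (f ^^ (n mod d)) a" using funpow_mult_fix[OF assms] by simp
  finally show ?thesis .
qed

lemma prime_dvd_of_dvd_power:
  fixes p d e :: nat
  assumes "Factorial_Ring.prime p" "d dvd p ^ e" "d \<noteq> 1"
  shows "p dvd d"
proof -
  have "d \<noteq> 0" using assms prime_gt_0_nat
    by (metis dvd_0_left_iff power_not_zero not_prime_0)
  then obtain q where q: "Factorial_Ring.prime q" "q dvd d"
    using assms(3) prime_factor_nat by blast
  then have "q dvd p ^ e" using assms(2) dvd_trans by blast
  then have "q dvd p" using q(1) prime_dvd_power by blast
  then have "q = p" using q(1) assms(1) primes_dvd_imp_eq by blast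
  then show ?thesis using q by simp
qed

lemma perm_fix_mod:
  fixes f :: "'a \<Rightarrow> 'a" and p e :: nat
  assumes fin: "finite E" and cl: "\<And>a. a \<in> E \<Longrightarrow> f a \<in> E"
    and per: "\<And>a. a \<in> E \<Longrightarrow> (f ^^ (p ^ e)) a = a" and pr: "Factorial_Ring.prime p"
  shows "p dvd card (E - {a\<in>E. f a = a})"
proof -
  define N where "N = p ^ e"
  have N0: "0 < N" using pr N_def by (simp add: prime_gt_0_nat)
  have perN: "(f ^^ N) a = a" if "a \<in> E" for a using per that N_def by simp
  have itE: "(f ^^ i) a \<in> E" if "a \<in> E" for a i
    using that by (induction i) (auto intro: cl)
  have fixpow: "(f ^^ i) a = a" if "f a = a" for a i
    using that by (induction i) auto
  define D where "D = E - {a\<in>E. f a = a}"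
  define orb where "orb a = range (\<lambda>i. (f ^^ i) a)" for a
  have bk: "(f ^^ (N * i - i)) ((f ^^ i) a) = a" if "a \<in> E" for a i
  proof -
    have "N * i \<ge> i" using N0 by simp
    then have "(f ^^ (N * i - i)) ((f ^^ i) a) = (f ^^ (N * i)) a"
      by (metis (no_types) comp_apply funpow_add le_add_diff_inverse2)
    also have "\<dots> = a" using funpow_mult_fix[OF perN[OF that]] by simp
    finally show ?thesis .
  qed
  have orb_sub: "orb a \<subseteq> D" if "a \<in> D" for a
  proof
    fix b assume "b \<in> orb a"
    then obtain i where b: "b = (f ^^ i) a" unfolding orb_def by auto
    have aE: "a \<in> E" using that D_def by auto
    have "b \<in> E" using b itE aE by simp
    moreover have "f b \<noteq> b"
    proof
      assume "f b = b"
      then have "(f ^^ (N * i - i)) b = b" using fixpow by simp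
      then have "a = b" using bk[OF aE, of i] b by simp
      then show False using that D_def \<open>f b = b\<close> by auto
    qed
    ultimately show "b \<in> D" unfolding D_def by auto
  qed
  have orb_eq: "orb b = orb a" if aE: "a \<in> E" and bo: "b \<in> orb a" for a b
  proof -
    obtain i where b: "b = (f ^^ i) a" using bo unfolding orb_def by auto
    show ?thesis
    proof
      show "orb b \<subseteq> orb a"
      proof
        fix c assume "c \<in> orb b"
        then obtain j where "c = (f ^^ j) b" unfolding orb_def by auto
        then have "c = (f ^^ (j + i)) a" using b by (simp add: funpow_add)
        then show "c \<in> orb a" unfolding orb_def by auto
      qed
    next
      show "orb a \<subseteq> orb b"
      proof
        fix c assume "c \<in> orb a"
        then obtain j where c: "c = (f ^^ j) a" unfolding orb_def by auto
        have "(f ^^ (j + (N * i - i))) b = (f ^^ j) ((f ^^ (N * i - i)) ((f ^^ i) a))"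
          using b by (simp add: funpow_add)
        also have "\<dots> = c" using bk[OF aE] c by simp
        finally show "c \<in> orb b" unfolding orb_def by (metis rangeI)
      qed
    qed
  qed
  have orb_card: "p dvd card (orb a)" if "a \<in> D" for a
  proof -
    have aE: "a \<in> E" and na: "f a \<noteq> a" using that D_def by auto
    define d where "d = (LEAST d. 0 < d \<and> (f ^^ d) a = a)"
    have ex: "0 < N \<and> (f ^^ N) a = a" using N0 perN[OF aE] by simp
    have d: "0 < d \<and> (f ^^ d) a = a"
      unfolding d_def by (rule LeastI[of _ N]) (rule ex)
    have dmin: "(f ^^ m) a \<noteq> a" if "0 < m" "m < d" for m
      using that not_less_Least unfolding d_def by blast
    have dvd_iff: "d dvd n" if "(f ^^ n) a = a" for n
    proof -
      have "(f ^^ (n mod d)) a = a" using funpow_mod_period[where f=f and d=d and a=a and n=n] d that by simp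
      moreover have "n mod d < d" using d by simp
      ultimately have "n mod d = 0" using dmin by (meson neq0_conv)
      then show ?thesis by auto
    qed
    have "d dvd N" using dvd_iff perN[OF aE] by simp
    moreover have "d \<noteq> 1" using d na by auto
    ultimately have pd: "p dvd d" using prime_dvd_of_dvd_power[OF pr] N_def by simp
    have img: "orb a = (\<lambda>i. (f ^^ i) a) ` {..<d}"
    proof
      show "orb a \<subseteq> (\<lambda>i. (f ^^ i) a) ` {..<d}"
      proof
        fix c assume "c \<in> orb a"
        then obtain n where c: "c = (f ^^ n) a" unfolding orb_def by auto
        then have "c = (f ^^ (n mod d)) a" using funpow_mod_period[where f=f and d=d and a=a and n=n] d by simp
        moreover have "n mod d < d" using d by simp
        ultimately show "c \<in> (\<lambda>i. (f ^^ i) a) ` {..<d}" by auto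
      qed
    qed (auto simp: orb_def)
    have inj: "inj_on (\<lambda>i. (f ^^ i) a) {..<d}"
    proof (rule inj_onI, rule ccontr)
      fix i j assume ij: "i \<in> {..<d}" "j \<in> {..<d}" "(f ^^ i) a = (f ^^ j) a" "i \<noteq> j"
      have key: "d dvd (d - i + j)" if "i < d" "(f ^^ i) a = (f ^^ j) a" for i j
      proof -
        have "(f ^^ (d - i + j)) a = (f ^^ (d - i)) ((f ^^ j) a)" by (simp add: funpow_add)
        also have "\<dots> = (f ^^ (d - i)) ((f ^^ i) a)" using that by simp
        also have "\<dots> = (f ^^ (d - i + i)) a" by (simp add: funpow_add)
        also have "\<dots> = a" using that d by simp
        finally show ?thesis using dvd_iff by blast
      qed
      show False
      proof (cases "i < j")
        case True
        have "d dvd (d - i + j)" using key ij by simp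
        moreover have "d - i + j = d + (j - i)" using True ij by auto
        ultimately have "d dvd (j - i)" by simp
        moreover have "0 < j - i" "j - i < d" using True ij by auto
        ultimately show False by (simp add: nat_dvd_not_less)
      next
        case False
        then have "j < i" using ij by simp
        have "d dvd (d - j + i)" using key[of j i] ij by simp
        moreover have "d - j + i = d + (i - j)" using \<open>j < i\<close> ij by auto
        ultimately have "d dvd (i - j)" by simp
        moreover have "0 < i - j" "i - j < d" using \<open>j < i\<close> ij by auto
        ultimately show False by (simp add: nat_dvd_not_less)
      qed
    qed
    have "card (orb a) = d" using img inj card_image by fastforce
    then show ?thesis using pd by simp
  qed
  have Dun: "D = \<Union> (orb ` D)"
  proof
    show "D \<subseteq> \<Union> (orb ` D)"
    proof
      fix a assume "a \<in> D"
      moreover have "a \<in> orb a" unfolding orb_def by (metis funpow_0 rangeI)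
      ultimately show "a \<in> \<Union> (orb ` D)" by auto
    qed
  qed (use orb_sub in auto)
  have finD: "finite D" using fin D_def by simp
  have disj: "pairwise disjnt (orb ` D)"
  proof (rule pairwiseI)
    fix U V assume UV: "U \<in> orb ` D" "V \<in> orb ` D" "U \<noteq> V"
    then obtain a b where ab: "a \<in> D" "b \<in> D" "U = orb a" "V = orb b" by auto
    show "disjnt U V"
    proof (rule ccontr)
      assume "\<not> disjnt U V"
      then obtain c where c: "c \<in> orb a" "c \<in> orb b" using ab unfolding disjnt_def by auto
      have aE: "a \<in> E" and bE: "b \<in> E" using ab D_def by auto
      have "orb c = orb a" by (rule orb_eq[OF aE c(1)])
      moreover have "orb c = orb b" by (rule orb_eq[OF bE c(2)])
      ultimately show False using UV ab by simp
    qed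
  qed
  have finorb: "finite A" if "A \<in> orb ` D" for A
    using that finD orb_sub finite_subset by blast
  have "card D = sum card (orb ` D)"
    using card_Union_disjoint[OF disj finorb] Dun by simp
  moreover have "p dvd sum card (orb ` D)"
    by (rule dvd_sum) (use orb_card in auto)
  ultimately show ?thesis unfolding D_def by simp
qed




context group begin

lemma inv_cancel_left [simp]:
  "x \<in> carrier G \<Longrightarrow> y \<in> carrier G \<Longrightarrow> inv x \<otimes> (x \<otimes> y) = y"
  by (simp add: m_assoc[symmetric])

lemma inv_cancel_left2 [simp]:
  "x \<in> carrier G \<Longrightarrow> y \<in> carrier G \<Longrightarrow> x \<otimes> (inv x \<otimes> y) = y"
  by (simp add: m_assoc[symmetric])

lemma sub_nat_pow:
  assumes "subgroup H G" "h \<in> H"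
  shows "h [^] (n::nat) \<in> H"
  using assms by (induction n) (simp_all add: subgroup.one_closed subgroup.m_closed)

lemma sub_cyclic:
  assumes fin: "finite (carrier G)" and x: "x \<in> carrier G" and H: "subgroup H G"
    and sub: "H \<subseteq> generate G {x}"
  shows "\<exists>g\<in>carrier G. H = generate G {g}"
proof -
  have genx: "generate G {x} = {x [^] k | k. k \<in> (UNIV :: nat set)}"
    using generate_pow_on_finite_carrier[OF fin x] .
  have ex: "0 < ord x \<and> x [^] ord x \<in> H"
    using ord_ge_1[OF fin x] subgroup.one_closed[OF H] x by simp
  define d where "d = (LEAST n::nat. 0 < n \<and> x [^] n \<in> H)"
  have d: "0 < d \<and> x [^] d \<in> H" unfolding d_def by (rule LeastI[of _ "ord x"]) (rule ex)
  have dmin: "\<not> (0 < m \<and> x [^] m \<in> H)" if "m < d" for m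
    using that not_less_Least unfolding d_def by blast
  have xd: "x [^] d \<in> carrier G" using x by simp
  show ?thesis
  proof (intro bexI[OF _ xd] equalityI)
    show "generate G {x [^] d} \<subseteq> H"
      using generate_subgroup_incl[of "{x [^] d}" H] d H by simp
    show "H \<subseteq> generate G {x [^] d}"
    proof
      fix h assume h: "h \<in> H"
      then obtain n where n: "h = x [^] (n::nat)" using sub genx by auto
      have eq: "x [^] n = (x [^] d) [^] (n div d) \<otimes> x [^] (n mod d)"
        using x by (simp add: nat_pow_pow nat_pow_mult)
      have c1: "(x [^] d) [^] (n div d) \<in> H"
        using d H by (simp add: sub_nat_pow)
      have "x [^] (n mod d) = inv ((x [^] d) [^] (n div d)) \<otimes> x [^] n"
        using eq x by (simp add: inv_solve_left)
      moreover have "inv ((x [^] d) [^] (n div d)) \<otimes> x [^] n \<in> H"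
        using c1 h n H by (simp add: subgroup.m_closed subgroup.m_inv_closed)
      ultimately have "x [^] (n mod d) \<in> H" by simp
      then have "n mod d = 0" using dmin[of "n mod d"] d by auto
      then have "h = (x [^] d) [^] (n div d)" using n eq x by simp
      then show "h \<in> generate G {x [^] d}"
        using generate_pow_on_finite_carrier[OF fin xd] by auto
    qed
  qed
qed

lemma generate_range:
  assumes "g \<in> carrier G"
  shows "generate G {g} = range (\<lambda>n::int. g [^] n)"
  using generate_pow[OF assms] by auto

lemma enh_iff:
  assumes fin: "finite (carrier G)" and a: "a \<in> carrier G" and b: "b \<in> carrier G"
  shows "b \<in> enh_nbhd G a \<longleftrightarrow> (\<exists>g\<in>carrier G. a \<in> generate G {g} \<and> b \<in> generate G {g})"
proof -
  let ?S = "subgroup_generated G {a, b}"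
  have cS: "carrier ?S = generate G {a, b}"
    using a b by (simp add: carrier_subgroup_generated Int_absorb1)
  have gS: "Group.group ?S" by simp
  have ab: "a \<in> generate G {a, b}" "b \<in> generate G {a, b}"
    by (auto intro: generate.incl)
  show ?thesis
  proof
    assume "b \<in> enh_nbhd G a"
    then have "cyclic_group ?S" unfolding enh_nbhd_def by simp
    then obtain g where g: "g \<in> carrier ?S" "carrier ?S = range (\<lambda>n::int. g [^]\<^bsub>?S\<^esub> n)"
      using group.cyclic_group[OF gS] by blast
    have gG: "g \<in> carrier G" using g(1) cS generate_in_carrier[of "{a,b}"] a b by auto
    have "carrier ?S = range (\<lambda>n::int. g [^] n)"
      using g int_pow_subgroup_generated[OF g(1)] by simp
    then have "generate G {a, b} = generate G {g}" using cS generate_range[OF gG] by simp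
    then show "\<exists>g\<in>carrier G. a \<in> generate G {g} \<and> b \<in> generate G {g}"
      using gG ab by auto
  next
    assume "\<exists>g\<in>carrier G. a \<in> generate G {g} \<and> b \<in> generate G {g}"
    then obtain g where g: "g \<in> carrier G" "a \<in> generate G {g}" "b \<in> generate G {g}" by blast
    have "generate G {a, b} \<subseteq> generate G {g}"
      using generate_subgroup_incl[of "{a,b}" "generate G {g}"] g generate_is_subgroup[of "{g}"] by auto
    then obtain g' where g': "g' \<in> carrier G" "generate G {a, b} = generate G {g'}"
      using sub_cyclic[OF fin g(1) generate_is_subgroup[of "{a,b}"]] a b by auto
    have g'S: "g' \<in> carrier ?S" using cS g' by (auto intro: generate.incl)
    have "carrier ?S = range (\<lambda>n::int. g' [^]\<^bsub>?S\<^esub> n)"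
      using cS g' generate_range[OF g'(1)] int_pow_subgroup_generated[OF g'S] by simp
    then have "cyclic_group ?S" using group.cyclic_group[OF gS] g'S by blast
    then show "b \<in> enh_nbhd G a" unfolding enh_nbhd_def using b by simp
  qed
qed

lemma conj_hom:
  assumes g: "g \<in> carrier G"
  shows "group_hom G G (\<lambda>a. g \<otimes> a \<otimes> inv g)"
proof -
  have "(g \<otimes> a \<otimes> inv g) \<otimes> (g \<otimes> b \<otimes> inv g) = g \<otimes> (a \<otimes> b) \<otimes> inv g"
    if "a \<in> carrier G" "b \<in> carrier G" for a b
  proof -
    have "(g \<otimes> a \<otimes> inv g) \<otimes> (g \<otimes> b \<otimes> inv g) = g \<otimes> a \<otimes> (inv g \<otimes> g) \<otimes> b \<otimes> inv g"
      using that g by (simp add: m_assoc)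
    also have "\<dots> = g \<otimes> (a \<otimes> b) \<otimes> inv g" using that g by (simp add: m_assoc)
    finally show ?thesis .
  qed
  then have "(\<lambda>a. g \<otimes> a \<otimes> inv g) \<in> hom G G"
    unfolding hom_def using g by auto
  then show ?thesis
    by (simp add: group_hom_def group_hom_axioms_def is_group)
qed

lemma conj_int_pow:
  assumes "g \<in> carrier G" "a \<in> carrier G"
  shows "g \<otimes> a [^] (i::int) \<otimes> inv g = (g \<otimes> a \<otimes> inv g) [^] i"
  using group_hom.hom_int_pow[OF conj_hom[OF assms(1)] assms(2)] by simp

lemma conj_nat_pow:
  assumes "g \<in> carrier G" "a \<in> carrier G"
  shows "g \<otimes> a [^] (i::nat) \<otimes> inv g = (g \<otimes> a \<otimes> inv g) [^] i"
  using group_hom.hom_nat_pow[OF conj_hom[OF assms(1)] assms(2)] by simp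

lemma ord_ppow:
  assumes fin: "finite (carrier G)" and card: "card (carrier G) = p ^ k"
    and pr: "Factorial_Ring.prime p" and a: "a \<in> carrier G"
  shows "\<exists>j\<le>k. ord a = p ^ j"
proof -
  have "ord a dvd p ^ k" using ord_dvd_group_order[OF a] card by (simp add: order_def)
  then show ?thesis using divides_primepow_nat[OF pr] by blast
qed

end




context group begin

lemma fixed_coset:
  assumes fin: "finite (carrier G)" and card: "card (carrier G) = p ^ k"
    and pr: "Factorial_Ring.prime p" and K: "subgroup K G" and KG: "K \<noteq> carrier G"
    and xK: "x \<in> K" and ordx: "ord x = p ^ e"
  shows "\<exists>g\<in>carrier G. g \<notin> K \<and> g \<otimes> x \<otimes> inv g \<in> K"
proof -
  have Ksub: "K \<subseteq> carrier G" using K subgroup.subset by blast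
  have x: "x \<in> carrier G" using xK Ksub by blast
  define E where "E = rcosets K"
  define f where "f R = R #> x" for R
  have finE: "finite E" unfolding E_def RCOSETS_def using fin by auto
  have Erep: "\<exists>g\<in>carrier G. R = K #> g" if "R \<in> E" for R
    using that unfolding E_def RCOSETS_def by auto
  have fpow: "(f ^^ n) (K #> g) = K #> (g \<otimes> x [^] n)" if "g \<in> carrier G" for g n
  proof (induction n)
    case 0 then show ?case using that by simp
  next
    case (Suc n)
    have "(f ^^ Suc n) (K #> g) = f ((f ^^ n) (K #> g))" by simp
    also have "\<dots> = f (K #> (g \<otimes> x [^] n))" using Suc.IH by simp
    also have "\<dots> = (K #> (g \<otimes> x [^] n)) #> x" by (simp add: f_def)
    also have "\<dots> = K #> (g \<otimes> x [^] n \<otimes> x)" using coset_mult_assoc Ksub that x by simp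
    also have "\<dots> = K #> (g \<otimes> x [^] Suc n)" using that x by (simp add: m_assoc)
    finally show ?case .
  qed
  have cl: "f R \<in> E" if RE: "R \<in> E" for R
  proof -
    obtain g where g: "g \<in> carrier G" "R = K #> g" using Erep[OF RE] by blast
    have "f R = K #> (g \<otimes> x)" using g coset_mult_assoc Ksub x by (simp add: f_def)
    then show ?thesis unfolding E_def using rcosetsI[OF Ksub] g x by simp
  qed
  have per: "(f ^^ (p ^ e)) R = R" if RE: "R \<in> E" for R
  proof -
    obtain g where g: "g \<in> carrier G" "R = K #> g" using Erep[OF RE] by blast
    have "x [^] (p ^ e) = \<one>" using pow_ord_eq_1[OF x] ordx by simp
    then show ?thesis using fpow[OF g(1), of "p ^ e"] g by simp
  qed
  define Fix where "Fix = {R\<in>E. f R = R}"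
  have dvd1: "p dvd card (E - Fix)" unfolding Fix_def by (rule perm_fix_mod[OF finE cl per pr])
  have lag: "card E * card K = p ^ k"
    using lagrange_finite[OF fin K] card unfolding E_def order_def by simp
  then have "card E dvd p ^ k" by (metis dvd_triv_left)
  moreover have "card E \<noteq> 1"
  proof
    assume "card E = 1"
    then have "card K = card (carrier G)" using lag card by simp
    then have "K = carrier G" using card_subset_eq[OF fin Ksub] by simp
    then show False using KG by simp
  qed
  ultimately have dvdE: "p dvd card E" using prime_dvd_of_dvd_power[OF pr] by blast
  have FE: "Fix \<subseteq> E" unfolding Fix_def by auto
  have "card E = card Fix + card (E - Fix)"
    using card_Diff_subset[OF finite_subset[OF FE finE] FE] card_mono[OF finE FE] by simp
  then have dvdF: "p dvd card Fix" using dvd1 dvdE by (simp add: dvd_add_left_iff)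
  have KE: "K \<in> E"
    using rcosetsI[OF Ksub one_closed] Ksub unfolding E_def by simp
  have KF: "K \<in> Fix" unfolding Fix_def f_def using KE coset_join2[OF x K xK] by simp
  have finF: "finite Fix" using finite_subset[OF FE finE] .
  have "card Fix \<noteq> 0" using KF finF by auto
  then have "card Fix \<ge> p" using dvdF by (simp add: dvd_imp_le)
  moreover have "p \<ge> 2" using pr by (simp add: prime_ge_2_nat)
  ultimately have "\<not> Fix \<subseteq> {K}" using card_mono[of "{K}" Fix] by auto
  then obtain R where R: "R \<in> Fix" "R \<noteq> K" by auto
  obtain g where g: "g \<in> carrier G" "R = K #> g" using Erep R FE by blast
  have gK: "g \<notin> K" using coset_join2[OF g(1) K] R g by auto
  have "K #> g #> x = K #> g" using R g unfolding Fix_def f_def by simp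
  then have "K #> (g \<otimes> x) = K #> g" using coset_mult_assoc Ksub g x by simp
  then have "g \<otimes> x \<in> K #> g" using repr_independenceD[OF K, of "g \<otimes> x" g] g x by simp
  then have "g \<otimes> x \<otimes> inv g \<in> K" using subgroup.rcos_module[OF K is_group g(1), of "g \<otimes> x"] g x by simp
  then show ?thesis using g gK by blast
qed

lemma exp_props:
  assumes fin: "finite (carrier G)" and card: "card (carrier G) = p ^ k"
    and pr: "Factorial_Ring.prime p"
  shows "\<exists>x\<in>carrier G. ord x = group_exp G \<and> (\<forall>a\<in>carrier G. ord a dvd group_exp G)"
proof -
  define M where "M = Max (ord ` carrier G)"
  have ne: "carrier G \<noteq> {}" by auto
  have "M \<in> ord ` carrier G" unfolding M_def by (rule Max_in) (use fin ne in auto)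
  then obtain x where x: "x \<in> carrier G" "ord x = M" by auto
  obtain j where j: "M = p ^ j" using ord_ppow[OF fin card pr x(1)] x by auto
  have p1: "1 < p" using pr prime_gt_1_nat by blast
  have dvdM: "ord a dvd M" if a: "a \<in> carrier G" for a
  proof -
    obtain i where i: "ord a = p ^ i" using ord_ppow[OF fin card pr a] by auto
    have "ord a \<le> M" unfolding M_def using fin a by simp
    then have "i \<le> j" using i j p1 power_le_imp_le_exp by metis
    then show ?thesis using i j by (simp add: le_imp_power_dvd)
  qed
  have "group_exp G dvd M" unfolding group_exp_def by (rule Lcm_least) (use dvdM in auto)
  moreover have "M dvd group_exp G" unfolding group_exp_def using x by (metis dvd_Lcm image_eqI)
  ultimately have eq: "group_exp G = M" by (rule dvd_antisym)
  have "\<forall>a\<in>carrier G. ord a dvd group_exp G" using eq dvdM by simp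
  then show ?thesis using x eq by auto
qed

lemma gen_sub_enh:
  assumes fin: "finite (carrier G)" and a: "a \<in> carrier G"
  shows "generate G {a} \<subseteq> enh_nbhd G a"
proof
  fix b assume b: "b \<in> generate G {a}"
  have bG: "b \<in> carrier G" using generate_in_carrier[of "{a}" b] a b by auto
  have "a \<in> generate G {a}" by (auto intro: generate.incl)
  then show "b \<in> enh_nbhd G a" using enh_iff[OF fin a bG] a b by blast
qed

lemma enh_sub: "enh_nbhd G a \<subseteq> carrier G"
  unfolding enh_nbhd_def by auto

lemma nG_ge:
  assumes fin: "finite (carrier G)" and a: "a \<in> carrier G" "a \<noteq> \<one>"
  shows "card (enh_nbhd G a) \<le> n_G G"
  unfolding n_G_def using fin a by (intro Max_ge) auto

lemma nG_le:
  assumes fin: "finite (carrier G)" and nt: "carrier G \<noteq> {\<one>}"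
    and B: "\<And>a. a \<in> carrier G \<Longrightarrow> a \<noteq> \<one> \<Longrightarrow> card (enh_nbhd G a) \<le> B"
  shows "n_G G \<le> B"
proof -
  have "carrier G - {\<one>} \<noteq> {}" using nt one_closed by blast
  then show ?thesis unfolding n_G_def using fin B by (subst Max_le_iff) auto
qed

lemma card_gen: "a \<in> carrier G \<Longrightarrow> card (generate G {a}) = ord a"
  using generate_pow_card by simp

lemma exp_le_nG:
  assumes fin: "finite (carrier G)" and card: "card (carrier G) = p ^ k"
    and pr: "Factorial_Ring.prime p" and nt: "carrier G \<noteq> {\<one>}"
  shows "group_exp G \<le> n_G G"
proof -
  obtain x where x: "x \<in> carrier G" "ord x = group_exp G" "\<forall>a\<in>carrier G. ord a dvd group_exp G"
    using exp_props[OF fin card pr] by blast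
  have "x \<noteq> \<one>"
  proof
    assume "x = \<one>"
    then have e1: "group_exp G = 1" using x by simp
    have "\<forall>a\<in>carrier G. a = \<one>"
    proof
      fix a assume a: "a \<in> carrier G"
      then have "ord a = 1" using x(3) e1 by simp
      then show "a = \<one>" using ord_eq_1 a by simp
    qed
    then show False using nt one_closed by blast
  qed
  have "card (generate G {x}) \<le> card (enh_nbhd G x)"
    using gen_sub_enh[OF fin x(1)] enh_sub finite_subset[OF _ fin] by (metis card_mono)
  then show ?thesis using card_gen[OF x(1)] x nG_ge[OF fin x(1) \<open>x \<noteq> \<one>\<close>] by simp
qed

end




context group begin

lemma gen_carrier: "a \<in> carrier G \<Longrightarrow> generate G {a} \<subseteq> carrier G"
  using generate_in_carrier[of "{a}"] by blast

lemma gen_fin: "finite (carrier G) \<Longrightarrow> a \<in> carrier G \<Longrightarrow> finite (generate G {a})"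
  using gen_carrier finite_subset by blast

lemma cyclic_case:
  assumes fin: "finite (carrier G)" and card: "card (carrier G) = p ^ k"
    and pr: "Factorial_Ring.prime p" and nt: "carrier G \<noteq> {\<one>}" and cyc: "cyclic_group G"
  shows "n_G G = group_exp G"
proof -
  obtain g where g: "g \<in> carrier G" "carrier G = range (\<lambda>n::int. g [^] n)"
    using cyc cyclic_group by blast
  have cg: "generate G {g} = carrier G" using g generate_range by simp
  have og: "ord g = card (carrier G)" using card_gen[OF g(1)] cg by simp
  have "ord g dvd group_exp G" unfolding group_exp_def using g(1) by (metis dvd_Lcm image_eqI)
  moreover have "group_exp G dvd card (carrier G)"
    unfolding group_exp_def by (rule Lcm_least) (auto simp: ord_dvd_group_order[unfolded order_def])
  ultimately have e: "group_exp G = card (carrier G)" using og by (simp add: dvd_antisym)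
  have "n_G G \<le> card (carrier G)"
    by (rule nG_le[OF fin nt]) (use enh_sub fin card_mono in blast)
  then show ?thesis using exp_le_nG[OF fin card pr nt] e by simp
qed

lemma expp_case:
  assumes fin: "finite (carrier G)" and card: "card (carrier G) = p ^ k"
    and pr: "Factorial_Ring.prime p" and nt: "carrier G \<noteq> {\<one>}" and ep: "group_exp G = p"
  shows "n_G G = group_exp G"
proof -
  obtain x0 where x0: "x0 \<in> carrier G" "ord x0 = group_exp G" "\<forall>a\<in>carrier G. ord a dvd group_exp G"
    using exp_props[OF fin card pr] by blast
  have p0: "0 < p" using pr prime_gt_0_nat by blast
  have "card (enh_nbhd G a) \<le> p" if a: "a \<in> carrier G" "a \<noteq> \<one>" for a
  proof -
    have oa: "ord a = p"
    proof -
      have "ord a dvd p" using x0(3) a ep by simp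
      moreover have "ord a \<noteq> 1" using ord_eq_1 a by simp
      ultimately show ?thesis using pr by (metis prime_nat_iff)
    qed
    have "enh_nbhd G a \<subseteq> generate G {a}"
    proof
      fix b assume b: "b \<in> enh_nbhd G a"
      have bG: "b \<in> carrier G" using b enh_sub by blast
      obtain g where g: "g \<in> carrier G" "a \<in> generate G {g}" "b \<in> generate G {g}"
        using enh_iff[OF fin a(1) bG] b by blast
      have sub: "generate G {a} \<subseteq> generate G {g}"
        using generate_subgroup_incl[of "{a}" "generate G {g}"] g generate_is_subgroup[of "{g}"] by auto
      have "ord g dvd p" using x0(3) g ep by simp
      then have "ord g \<le> p" using p0 by (simp add: dvd_imp_le)
      then have "card (generate G {g}) \<le> card (generate G {a})"
        using card_gen[OF g(1)] card_gen[OF a(1)] oa by simp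
      then have "generate G {a} = generate G {g}"
        using card_seteq[OF gen_fin[OF fin g(1)] sub] by simp
      then show "b \<in> generate G {a}" using g by simp
    qed
    then have "card (enh_nbhd G a) \<le> card (generate G {a})"
      using card_mono[OF gen_fin[OF fin a(1)]] by simp
    then show ?thesis using card_gen[OF a(1)] oa by simp
  qed
  then have "n_G G \<le> p" using nG_le[OF fin nt] by blast
  then show ?thesis using exp_le_nG[OF fin card pr nt] ep by simp
qed

end




context group begin

lemma sq_gen:
  assumes fin: "finite (carrier G)" and g: "g \<in> carrier G" and gg: "g \<otimes> g = \<one>"
  shows "generate G {g} \<subseteq> {\<one>, g}"
proof
  fix b assume "b \<in> generate G {g}"
  then obtain k :: nat where b: "b = g [^] k"
    using generate_pow_on_finite_carrier[OF fin g] by auto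
  have "g [^] k \<in> {\<one>, g}" for k :: nat
  proof (induction k)
    case 0 then show ?case by simp
  next
    case (Suc k)
    then show ?case using g gg by auto
  qed
  then show "b \<in> {\<one>, g}" using b by simp
qed

lemma dih_case:
  assumes fin: "finite (carrier G)" and card: "card (carrier G) = p ^ k"
    and pr: "Factorial_Ring.prime p" and nt: "carrier G \<noteq> {\<one>}"
    and x: "x \<in> carrier G" and y: "y \<in> carrier G" and ox: "ord x = n" and n2: "2 \<le> n"
    and yx: "y \<notin> generate G {x}" and yy: "y \<otimes> y = \<one>" and yxy: "y \<otimes> x \<otimes> inv y = inv x"
    and all: "\<forall>g\<in>carrier G. g \<in> generate G {x} \<or> (\<exists>c\<in>generate G {x}. g = c \<otimes> y)"
  shows "n_G G = group_exp G"
proof -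
  define C where "C = generate G {x}"
  have Csub: "subgroup C G" unfolding C_def using generate_is_subgroup x by simp
  have CG: "C \<subseteq> carrier G" unfolding C_def using gen_carrier[OF x] .
  have invy: "inv y = y" using inv_equality[OF yy y y] .
  have invc: "y \<otimes> c \<otimes> inv y = inv c" if c: "c \<in> C" for c
  proof -
    obtain i :: int where i: "c = x [^] i" using c generate_pow[OF x] unfolding C_def by auto
    have "y \<otimes> c \<otimes> inv y = (inv x) [^] i" using conj_int_pow[OF y x, of i] yxy i by simp
    then show ?thesis using int_pow_inv[OF x] i by simp
  qed
  have sq: "g \<otimes> g = \<one>" if g: "g \<in> carrier G" "g \<notin> C" for g
  proof -
    obtain c where c: "c \<in> C" "g = c \<otimes> y" using all g unfolding C_def by blast
    have cG: "c \<in> carrier G" using c CG by blast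
    have "c \<otimes> y \<otimes> (c \<otimes> y) = c \<otimes> (y \<otimes> c \<otimes> inv y) \<otimes> (y \<otimes> y)"
      using cG y by (simp add: m_assoc)
    also have "\<dots> = \<one>" using invc[OF c(1)] yy cG by simp
    finally show ?thesis using c by simp
  qed
  have bound: "card (enh_nbhd G a) \<le> n" if a: "a \<in> carrier G" "a \<noteq> \<one>" for a
  proof (cases "a \<in> C")
    case True
    have "enh_nbhd G a \<subseteq> C"
    proof
      fix b assume b: "b \<in> enh_nbhd G a"
      have bG: "b \<in> carrier G" using b enh_sub by blast
      obtain g where g: "g \<in> carrier G" "a \<in> generate G {g}" "b \<in> generate G {g}"
        using enh_iff[OF fin a(1) bG] b by blast
      show "b \<in> C"
      proof (cases "g \<in> C")
        case True
        then have "generate G {g} \<subseteq> C" using generate_subgroup_incl[OF _ Csub] by simp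
        then show ?thesis using g by blast
      next
        case False
        then have "generate G {g} \<subseteq> {\<one>, g}" using sq_gen[OF fin g(1) sq[OF g(1) False]] by simp
        then have "a = g" using g a by blast
        then show ?thesis using False \<open>a \<in> C\<close> by simp
      qed
    qed
    then have "card (enh_nbhd G a) \<le> card C"
      using card_mono gen_fin[OF fin x] unfolding C_def by blast
    then show ?thesis using card_gen[OF x] ox unfolding C_def by simp
  next
    case False
    have "enh_nbhd G a \<subseteq> {\<one>, a}"
    proof
      fix b assume b: "b \<in> enh_nbhd G a"
      have bG: "b \<in> carrier G" using b enh_sub by blast
      obtain g where g: "g \<in> carrier G" "a \<in> generate G {g}" "b \<in> generate G {g}"
        using enh_iff[OF fin a(1) bG] b by blast
      show "b \<in> {\<one>, a}"
      proof (cases "g \<in> C")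
        case True
        then have "generate G {g} \<subseteq> C" using generate_subgroup_incl[OF _ Csub] by simp
        then show ?thesis using g False by blast
      next
        case gC: False
        then have "generate G {g} \<subseteq> {\<one>, g}" using sq_gen[OF fin g(1) sq[OF g(1) gC]] by simp
        then have "a = g" using g a by blast
        then show ?thesis using g \<open>generate G {g} \<subseteq> {\<one>, g}\<close> by blast
      qed
    qed
    then have "card (enh_nbhd G a) \<le> card {\<one>, a}" by (simp add: card_mono)
    also have "\<dots> \<le> 2" by (simp add: card_insert_le_m1)
    finally show ?thesis using n2 by simp
  qed
  have le: "n_G G \<le> n" using nG_le[OF fin nt] bound by blast
  obtain x0 where x0: "x0 \<in> carrier G" "ord x0 = group_exp G" "\<forall>a\<in>carrier G. ord a dvd group_exp G"
    using exp_props[OF fin card pr] by blast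
  have "0 < group_exp G" using ord_ge_1[OF fin x0(1)] x0(2) by simp
  then have "n \<le> group_exp G" using x0(3) x ox by (metis dvd_imp_le)
  then show ?thesis using exp_le_nG[OF fin card pr nt] le by simp
qed

end




context group begin

lemma dih_from_iso:
  assumes fin: "finite (carrier G)" and m: "1 \<le> m" and iso: "G \<cong> dihedral_group (2 ^ m)"
  shows "\<exists>x y. x \<in> carrier G \<and> y \<in> carrier G \<and> ord x = 2 ^ m \<and> y \<notin> generate G {x}
     \<and> y \<otimes> y = \<one> \<and> y \<otimes> x \<otimes> inv y = inv x
     \<and> (\<forall>g\<in>carrier G. g \<in> generate G {x} \<or> (\<exists>c\<in>generate G {x}. g = c \<otimes> y))"
proof -
  define n :: nat where "n = 2 ^ m"
  have n2: "2 \<le> n" unfolding n_def using m by (metis one_le_numeral power_increasing power_one_right)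
  define D where "D = dihedral_group n"
  obtain \<phi> where \<phi>: "\<phi> \<in> iso G D" using iso unfolding is_iso_def D_def n_def by blast
  define \<psi> where "\<psi> = inv_into (carrier G) \<phi>"
  have \<psi>: "\<psi> \<in> iso D G" unfolding \<psi>_def using iso_set_sym[OF \<phi>] .
  have hom: "\<psi> \<in> hom D G" using \<psi> by (simp add: iso_def)
  have bij: "bij_betw \<psi> (carrier D) (carrier G)" using \<psi> by (simp add: iso_def)
  have cD: "carrier D = {0..<int n} \<times> UNIV" by (simp add: D_def dihedral_group_def)
  have mD: "(a, s) \<otimes>\<^bsub>D\<^esub> (b, t) = ((if s then a - b else a + b) mod int n, s \<noteq> t)" for a b s t
    by (simp add: D_def dihedral_group_def)
  have inD: "(a, s) \<in> carrier D" if "0 \<le> a" "a < int n" for a s using that cD by simp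
  have hm: "\<psi> (u \<otimes>\<^bsub>D\<^esub> v) = \<psi> u \<otimes> \<psi> v" if "u \<in> carrier D" "v \<in> carrier D" for u v
    using hom that by (simp add: hom_mult)
  have \<psi>c: "\<psi> u \<in> carrier G" if "u \<in> carrier D" for u using hom that by (auto simp: hom_def)
  have inj: "inj_on \<psi> (carrier D)" using bij by (simp add: bij_betw_def)
  have D00: "(0::int, False) \<in> carrier D" using inD n2 by simp
  have e1: "\<psi> (0, False) = \<one>"
  proof -
    have "\<psi> (0, False) = \<psi> (0, False) \<otimes> \<psi> (0, False)"
      using hm[OF D00 D00] mD[of 0 False 0 False] by simp
    then show ?thesis using \<psi>c[OF D00] by simp
  qed
  define xr where "xr = \<psi> (1, False)"
  define yr where "yr = \<psi> (0, True)"
  have D10: "(1::int, False) \<in> carrier D" using inD n2 by simp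
  have D0T: "(0::int, True) \<in> carrier D" using inD n2 by simp
  have XG: "xr \<in> carrier G" using \<psi>c[OF D10] xr_def by simp
  have YG: "yr \<in> carrier G" using \<psi>c[OF D0T] yr_def by simp
  have modD: "(a mod int n, s) \<in> carrier D" for a s using inD n2 by simp
  have Xpow: "xr [^] (i::nat) = \<psi> (int i mod int n, False)" for i
  proof (induction i)
    case 0 then show ?case using e1 by simp
  next
    case (Suc i)
    have "xr [^] Suc i = \<psi> (int i mod int n, False) \<otimes> \<psi> (1, False)" using Suc xr_def by simp
    also have "\<dots> = \<psi> ((int i mod int n, False) \<otimes>\<^bsub>D\<^esub> (1, False))" using hm[OF modD D10] by simp
    also have "\<dots> = \<psi> ((int i mod int n + 1) mod int n, False)" using mD by simp
    also have "\<dots> = \<psi> (int (Suc i) mod int n, False)" 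
    proof -
      have "(int i mod int n + 1) mod int n = (int i + 1) mod int n" by (rule mod_add_left_eq)
      then show ?thesis by (simp add: add.commute)
    qed
    finally show ?case .
  qed
  have oX: "ord xr = n"
  proof -
    have Xn: "xr [^] n = \<one>" using Xpow[of n] e1 by simp
    then have d: "ord xr dvd n" using pow_eq_id[OF XG] by simp
    then have "ord xr \<noteq> 0" using n2 by (metis dvd_0_left_iff not_numeral_le_zero)
    moreover have "\<not> ord xr < n"
    proof
      assume lt: "ord xr < n"
      have "xr [^] ord xr = \<psi> (int (ord xr), False)" using Xpow[of "ord xr"] lt by simp
      moreover have "xr [^] ord xr = \<psi> (0, False)" using e1 XG by simp
      ultimately have "\<psi> (int (ord xr), False) = \<psi> (0, False)" by simp
      moreover have "(int (ord xr), False) \<in> carrier D" using inD lt by simp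
      ultimately have "int (ord xr) = 0" using inj D00 by (auto dest: inj_onD)
      then show False using \<open>ord xr \<noteq> 0\<close> by simp
    qed
    moreover have "ord xr \<le> n" using d n2 by (simp add: dvd_imp_le)
    ultimately show ?thesis by simp
  qed
  have YY: "yr \<otimes> yr = \<one>"
  proof -
    have "yr \<otimes> yr = \<psi> ((0, True) \<otimes>\<^bsub>D\<^esub> (0, True))" using hm[OF D0T D0T] yr_def by simp
    then show ?thesis using mD e1 by simp
  qed
  have invY: "inv yr = yr" using inv_equality[OF YY YG YG] .
  have m1: "(-1::int) mod int n = int n - 1" by (rule zmod_minus1) (use n2 in simp)
  have m2: "(int n - 1) mod int n = int n - 1" by (rule mod_pos_pos_trivial) (use n2 in auto)
  have Dn1: "(int n - 1, False) \<in> carrier D" "(int n - 1, True) \<in> carrier D" using inD n2 by auto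
  have "yr \<otimes> xr \<otimes> yr = \<psi> (((0, True) \<otimes>\<^bsub>D\<^esub> (1, False)) \<otimes>\<^bsub>D\<^esub> (0, True))"
  proof -
    have a: "(0::int, True) \<otimes>\<^bsub>D\<^esub> (1, False) = (int n - 1, True)" using mD m1 by simp
    have "yr \<otimes> xr = \<psi> ((0, True) \<otimes>\<^bsub>D\<^esub> (1, False))" using hm[OF D0T D10] xr_def yr_def by simp
    then have "yr \<otimes> xr \<otimes> yr = \<psi> (int n - 1, True) \<otimes> \<psi> (0, True)" using a yr_def by simp
    also have "\<dots> = \<psi> ((int n - 1, True) \<otimes>\<^bsub>D\<^esub> (0, True))" using hm[OF Dn1(2) D0T] by simp
    finally show ?thesis using a by simp
  qed
  also have "\<dots> = \<psi> (int n - 1, False)"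
  proof -
    have "(0::int, True) \<otimes>\<^bsub>D\<^esub> (1, False) = (int n - 1, True)" using mD m1 by simp
    moreover have "(int n - 1, True) \<otimes>\<^bsub>D\<^esub> (0, True) = (int n - 1, False)" using mD m2 by simp
    ultimately show ?thesis by simp
  qed
  also have "\<dots> = xr [^] (n - 1)" using Xpow[of "n - 1"] n2 m1 by (simp add: of_nat_diff)
  also have "\<dots> = inv xr"
  proof -
    have nn: "n = Suc (n - 1)" using n2 by simp
    have "xr [^] (n - 1) \<otimes> xr = xr [^] Suc (n - 1)" by (simp only: nat_pow_Suc)
    also have "\<dots> = xr [^] n" using nn by simp
    also have "\<dots> = \<one>" using pow_ord_eq_1[OF XG] oX by simp
    finally have h: "xr [^] (n - 1) \<otimes> xr = \<one>" .
    show ?thesis using inv_equality[OF h XG nat_pow_closed[OF XG]] by simp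
  qed
  finally have YXY: "yr \<otimes> xr \<otimes> inv yr = inv xr" using invY by simp
  have genX: "generate G {xr} = {xr [^] k | k. k \<in> (UNIV :: nat set)}"
    using generate_pow_on_finite_carrier[OF fin XG] .
  have Ynot: "yr \<notin> generate G {xr}"
  proof
    assume "yr \<in> generate G {xr}"
    then obtain k :: nat where "yr = xr [^] k" using genX by auto
    then have "\<psi> (0, True) = \<psi> (int k mod int n, False)" using Xpow yr_def by simp
    then have "(0::int, True) = (int k mod int n, False)" using inj D0T modD by (auto dest: inj_onD)
    then show False by simp
  qed
  have all: "\<forall>g\<in>carrier G. g \<in> generate G {xr} \<or> (\<exists>c\<in>generate G {xr}. g = c \<otimes> yr)"
  proof
    fix g assume g: "g \<in> carrier G"
    then have "g \<in> \<psi> ` carrier D" using bij by (simp add: bij_betw_def)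
    then obtain u where u: "u \<in> carrier D" "g = \<psi> u" by blast
    obtain a s where as: "u = (a, s)" by (cases u)
    have a: "0 \<le> a" "a < int n" using u as cD by auto
    have pa: "\<psi> (a, False) = xr [^] (nat a)" using Xpow[of "nat a"] a by simp
    have Xa: "xr [^] (nat a) \<in> generate G {xr}" using genX by auto
    show "g \<in> generate G {xr} \<or> (\<exists>c\<in>generate G {xr}. g = c \<otimes> yr)"
    proof (cases s)
      case False
      then show ?thesis using u as pa Xa by simp
    next
      case True
      have "(a, False) \<otimes>\<^bsub>D\<^esub> (0, True) = (a, True)" using mD a by simp
      then have "\<psi> (a, True) = \<psi> (a, False) \<otimes> yr" using hm[OF inD[OF a, of False] D0T] yr_def by metis
      then show ?thesis using u as pa Xa True by auto
    qed
  qed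
  show ?thesis using XG YG oX Ynot YY YXY all n_def by blast
qed

end




fun ssq :: "nat \<Rightarrow> nat \<Rightarrow> nat" where
  "ssq r 0 = 0"
| "ssq r (Suc n) = 1 + r * ssq r n"

lemma ssq_cong:
  assumes r: "int r = 1 + int p * t"
  shows "\<exists>q. 2 * int (ssq r n) = 2 * int n + int p * t * int n * (int n - 1) + (int p)^2 * q"
proof (induction n)
  case 0 then show ?case by simp
next
  case (Suc n)
  then obtain q where q: "2 * int (ssq r n) = 2 * int n + int p * t * int n * (int n - 1) + (int p)^2 * q"
    by blast
  let ?q = "q + t^2 * int n * (int n - 1) + int p * t * q"
  have "2 * int (ssq r (Suc n)) = 2 + int r * (2 * int (ssq r n))" by simp
  also have "\<dots> = 2 + (1 + int p * t) * (2 * int n + int p * t * int n * (int n - 1) + (int p)^2 * q)"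
    using r q by simp
  also have "\<dots> = 2 * int (Suc n) + int p * t * int (Suc n) * (int (Suc n) - 1) + (int p)^2 * ?q"
    by (simp add: algebra_simps power2_eq_square)
  finally show ?case by blast
qed

lemma ssq_nodvd:
  assumes pr: "Factorial_Ring.prime p" and p2: "p \<noteq> 2" and dv: "int p dvd int r - 1"
  shows "\<not> p^2 dvd ssq r p"
proof
  assume d: "p^2 dvd ssq r p"
  obtain t where t: "int r - 1 = int p * t" using dv by (auto elim: dvdE)
  then have r: "int r = 1 + int p * t" by simp
  obtain q where q: "2 * int (ssq r p) = 2 * int p + int p * t * int p * (int p - 1) + (int p)^2 * q"
    using ssq_cong[OF r] by blast
  obtain m where m: "ssq r p = p^2 * m" using d by (auto elim: dvdE)
  have "2 * int p = (int p)^2 * (2 * int m - t * (int p - 1) - q)"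
    using q m by (simp add: algebra_simps power2_eq_square)
  then have "int p * 2 = int p * (int p * (2 * int m - t * (int p - 1) - q))"
    by (simp add: algebra_simps power2_eq_square)
  moreover have "int p \<noteq> 0" using pr by (simp add: prime_gt_0_nat)
  ultimately have "2 = int p * (2 * int m - t * (int p - 1) - q)" by simp
  then have "int p dvd 2" by (metis dvd_triv_left)
  then have "p dvd 2" by presburger
  then have "p \<le> 2" by (simp add: dvd_imp_le)
  moreover have "p \<ge> 2" using pr by (simp add: prime_ge_2_nat)
  ultimately show False using p2 by simp
qed

lemma four_not_dvd: "\<not> (4::nat) dvd s * s + 1"
proof
  assume "4 dvd s * s + 1"
  then have "even (s * s + 1)" by (metis dvd_trans even_numeral)
  then have "odd s" by simp
  then obtain q where "s = 2 * q + 1" by (auto elim: oddE)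
  then have "s * s + 1 = 4 * (q * q + q) + 2" by (simp add: algebra_simps)
  with \<open>4 dvd s * s + 1\<close> show False by presburger
qed

lemma iso_sym_gen:
  assumes "h \<in> iso G H"
    and cl: "\<And>a b. a \<in> carrier G \<Longrightarrow> b \<in> carrier G \<Longrightarrow> a \<otimes>\<^bsub>G\<^esub> b \<in> carrier G"
  shows "inv_into (carrier G) h \<in> iso H G"
proof -
  have h: "h \<in> hom G H" "bij_betw h (carrier G) (carrier H)"
    using assms by (auto simp add: iso_def bij_betw_inv_into)
  then have HG: "bij_betw (inv_into (carrier G) h) (carrier H) (carrier G)"
    by (simp add: bij_betw_inv_into)
  have "inv_into (carrier G) h \<in> hom H G"
    unfolding hom_def
  proof safe
    show *: "\<And>x. x \<in> carrier H \<Longrightarrow> inv_into (carrier G) h x \<in> carrier G"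
      by (meson HG bij_betwE)
    show "inv_into (carrier G) h (x \<otimes>\<^bsub>H\<^esub> y) = inv_into (carrier G) h x \<otimes>\<^bsub>G\<^esub> inv_into (carrier G) h y"
      if "x \<in> carrier H" "y \<in> carrier H" for x y
    proof (rule inv_into_f_eq)
      show "inj_on h (carrier G)"
        using bij_betw_def h(2) by blast
      show "inv_into (carrier G) h x \<otimes>\<^bsub>G\<^esub> inv_into (carrier G) h y \<in> carrier G"
        using * that cl by simp
      show "h (inv_into (carrier G) h x \<otimes>\<^bsub>G\<^esub> inv_into (carrier G) h y) = x \<otimes>\<^bsub>H\<^esub> y"
        using h bij_betw_inv_into_right [of h] unfolding hom_def by (simp add: "*" that)
    qed
  qed
  then show ?thesis
    by (simp add: Group.iso_def bij_betw_inv_into h)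
qed


lemma int_dvd_small:
  fixes d :: int
  assumes "int n dvd d" "- int n < d" "d < int n"
  shows "d = 0"
proof -
  obtain k where k: "d = int n * k" using assms(1) by (auto elim: dvdE)
  have "k = 0"
  proof (rule ccontr)
    assume "k \<noteq> 0"
    then consider "k \<ge> 1" | "k \<le> -1" by linarith
    then show False
    proof cases
      case 1
      then have "int n * 1 \<le> int n * k" by (intro mult_left_mono) auto
      then show False using k assms(3) by linarith
    next
      case 2
      then have "int n * k \<le> int n * (-1)" by (intro mult_left_mono) auto
      then show False using k assms(2) by linarith
    qed
  qed
  then show ?thesis using k by simp
qed

context group begin

lemma dih_to_iso:
  assumes x: "x \<in> carrier G" and y: "y \<in> carrier G" and ox: "ord x = n" and n2: "2 \<le> n"
    and yx: "y \<notin> generate G {x}" and yy: "y \<otimes> y = \<one>" and yxy: "y \<otimes> x \<otimes> inv y = inv x"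
    and all: "\<forall>g\<in>carrier G. g \<in> generate G {x} \<or> (\<exists>c\<in>generate G {x}. g = c \<otimes> y)"
  shows "G \<cong> dihedral_group n"
proof -
  define D where "D = dihedral_group n"
  have cD: "carrier D = {0..<int n} \<times> UNIV" by (simp add: D_def dihedral_group_def)
  have mD: "(a, s) \<otimes>\<^bsub>D\<^esub> (b, t) = ((if s then a - b else a + b) mod int n, s \<noteq> t)" for a b s t
    by (simp add: D_def dihedral_group_def)
  have n0: "0 < int n" using n2 by simp
  define \<psi> where "\<psi> = (\<lambda>(a::int, s::bool). x [^] a \<otimes> (if s then y else \<one>))"
  have \<psi>s: "\<psi> (a, s) = x [^] a \<otimes> (if s then y else \<one>)" for a s by (simp add: \<psi>_def)
  have xmod: "x [^] (c mod int n) = x [^] c" for c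
  proof -
    have "int n dvd c - c mod int n" by (simp add: minus_mod_eq_mult_div)
    then show ?thesis using int_pow_eq[OF x] ox by simp
  qed
  have invy: "inv y = y" using inv_equality[OF yy y y] .
  have yb: "y \<otimes> x [^] (b::int) = x [^] (-b) \<otimes> y" for b
  proof -
    have "y \<otimes> x [^] b = y \<otimes> x [^] b \<otimes> inv y \<otimes> y" using x y by (simp add: m_assoc)
    also have "y \<otimes> x [^] b \<otimes> inv y = (inv x) [^] b" using conj_int_pow[OF y x, of b] yxy by simp
    also have "\<dots> = x [^] (-b)" using int_pow_inv[OF x] int_pow_neg[OF x] by simp
    finally show ?thesis .
  qed
  have xc: "x [^] (i::int) \<in> carrier G" for i using x by simp
  have hom: "\<psi> \<in> hom D G"
  proof (rule homI)
    fix u assume "u \<in> carrier D"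
    then show "\<psi> u \<in> carrier G" using x y by (cases u) (simp add: \<psi>s)
  next
    fix u v assume u: "u \<in> carrier D" and v: "v \<in> carrier D"
    obtain a s where as: "u = (a, s)" by (cases u)
    obtain b t where bt: "v = (b, t)" by (cases v)
    have lhs: "\<psi> (u \<otimes>\<^bsub>D\<^esub> v) = x [^] (if s then a - b else a + b) \<otimes> (if s \<noteq> t then y else \<one>)"
      using as bt mD \<psi>s xmod by simp
    have sub: "a - b = a + (- b)" by simp
    show "\<psi> (u \<otimes>\<^bsub>D\<^esub> v) = \<psi> u \<otimes> \<psi> v"
    proof (cases s)
      case False
      then show ?thesis using lhs as bt \<psi>s x y by (cases t) (simp_all add: int_pow_mult m_assoc)
    next
      case True
      have e1: "x [^] a \<otimes> y \<otimes> (x [^] b \<otimes> w) = x [^] (a - b) \<otimes> (y \<otimes> w)" if w: "w \<in> carrier G" for w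
      proof -
        have "x [^] a \<otimes> y \<otimes> (x [^] b \<otimes> w) = x [^] a \<otimes> (y \<otimes> x [^] b) \<otimes> w"
          using x y w by (simp add: m_assoc)
        also have "\<dots> = x [^] a \<otimes> x [^] (-b) \<otimes> (y \<otimes> w)" using yb x y w by (simp add: m_assoc)
        also have "\<dots> = x [^] (a - b) \<otimes> (y \<otimes> w)" using int_pow_mult[OF x, of a "-b"] by simp
        finally show ?thesis .
      qed
      show ?thesis
      proof (cases t)
        case False
        then show ?thesis using lhs as bt \<psi>s True e1[of \<one>] x y by simp
      next
        case t: True
        then show ?thesis using lhs as bt \<psi>s True e1[of y] x y yy by simp
      qed
    qed
  qed
  have inj: "inj_on \<psi> (carrier D)"
  proof (rule inj_onI)
    fix u v assume u: "u \<in> carrier D" and v: "v \<in> carrier D" and eq: "\<psi> u = \<psi> v"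
    obtain a s where as: "u = (a, s)" by (cases u)
    obtain b t where bt: "v = (b, t)" by (cases v)
    have ab: "0 \<le> a" "a < int n" "0 \<le> b" "b < int n" using u v as bt cD by auto
    have eq2: "x [^] a \<otimes> (if s then y else \<one>) = x [^] b \<otimes> (if t then y else \<one>)"
      using eq as bt \<psi>s by simp
    have noty: False if st: "x [^] a \<otimes> y = x [^] b" for a b :: int
    proof -
      have "y = x [^] (-a) \<otimes> (x [^] a \<otimes> y)"
        using x y by (simp add: m_assoc[symmetric] int_pow_mult[symmetric])
      also have "\<dots> = x [^] (b - a)" using st int_pow_mult[OF x, of "-a" b] by simp
      finally have "y = x [^] (b - a)" .
      then have "y \<in> generate G {x}" using generate_pow[OF x] by auto
      then show False using yx by simp
    qed
    show "u = v"
    proof (cases "s = t")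
      case True
      then have "x [^] a = x [^] b" using eq2 x y by (cases s) simp_all
      then have "int n dvd b - a" using int_pow_eq[OF x] ox by simp
      moreover have "- int n < b - a" "b - a < int n" using ab by linarith+
      ultimately have "b - a = 0" by (rule int_dvd_small)
      then show ?thesis using as bt True by simp
    next
      case False
      then show ?thesis
      proof (cases s)
        case True
        then have "x [^] a \<otimes> y = x [^] b" using eq2 False x by simp
        then show ?thesis using noty by blast
      next
        case sF: False
        then have "x [^] b \<otimes> y = x [^] a" using eq2 False x by simp
        then show ?thesis using noty by blast
      qed
    qed
  qed
  have surj: "\<psi> ` carrier D = carrier G"
  proof
    show "\<psi> ` carrier D \<subseteq> carrier G" using hom by (auto simp: hom_def)
  next
    show "carrier G \<subseteq> \<psi> ` carrier D"
    proof
      fix g assume g: "g \<in> carrier G"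
      have inD: "(i mod int n, s) \<in> carrier D" for i s using cD n0 by simp
      show "g \<in> \<psi> ` carrier D"
      proof (cases "g \<in> generate G {x}")
        case True
        then obtain i :: int where i: "g = x [^] i" using generate_pow[OF x] by auto
        have "\<psi> (i mod int n, False) = g" using \<psi>s xmod i x by simp
        then show ?thesis using inD by (metis image_eqI)
      next
        case False
        then obtain c where c: "c \<in> generate G {x}" "g = c \<otimes> y" using all g by blast
        then obtain i :: int where i: "c = x [^] i" using generate_pow[OF x] by auto
        have "\<psi> (i mod int n, True) = g" using \<psi>s xmod i c by simp
        then show ?thesis using inD by (metis image_eqI)
      qed
    qed
  qed
  have iso: "\<psi> \<in> iso D G" using hom inj surj by (simp add: iso_def bij_betw_def)
  have clD: "a \<otimes>\<^bsub>D\<^esub> b \<in> carrier D" if "a \<in> carrier D" "b \<in> carrier D" for a b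
    using cD mD n0 by (cases a, cases b) simp
  have "inv_into (carrier D) \<psi> \<in> iso G D" using iso_sym_gen[OF iso clD] by blast
  then show ?thesis unfolding D_def using is_isoI by blast
qed

end




locale pgx = group +
  fixes p k e :: nat and x
  assumes fin: "finite (carrier G)" and card: "card (carrier G) = p ^ k"
    and pr: "Factorial_Ring.prime p" and x: "x \<in> carrier G" and ox: "ord x = p ^ e"
    and e2: "2 \<le> e" and nGle: "n_G G \<le> p ^ e"
begin

abbreviation Cx where "Cx \<equiv> generate G {x}"
abbreviation Nx where "Nx \<equiv> {g \<in> carrier G. g \<otimes> x \<otimes> inv g \<in> Cx}"

lemma Csub: "subgroup Cx G" using generate_is_subgroup x by simp
lemma CG: "Cx \<subseteq> carrier G" using gen_carrier[OF x] .
lemma cardC: "card Cx = p ^ e" using card_gen[OF x] ox by simp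
lemma xC: "x \<in> Cx" by (auto intro: generate.incl)
lemma oneC: "\<one> \<in> Cx" using subgroup.one_closed[OF Csub] .
lemma C_mult: "a \<in> Cx \<Longrightarrow> b \<in> Cx \<Longrightarrow> a \<otimes> b \<in> Cx" using subgroup.m_closed[OF Csub] .
lemma C_inv: "a \<in> Cx \<Longrightarrow> inv a \<in> Cx" using subgroup.m_inv_closed[OF Csub] .
lemma C_pow: "a \<in> Cx \<Longrightarrow> a [^] (n::nat) \<in> Cx" using sub_nat_pow[OF Csub] .
lemma x_pow_C: "x [^] (n::nat) \<in> Cx" using C_pow[OF xC] .
lemma C_nat: "c \<in> Cx \<Longrightarrow> \<exists>r::nat. c = x [^] r"
  using generate_pow_on_finite_carrier[OF fin x] by auto

lemma p1: "1 < p" using pr prime_gt_1_nat by blast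

lemma xp: "x [^] p \<noteq> \<one>"
proof
  assume "x [^] p = \<one>"
  then have "p ^ e dvd p" using pow_eq_id[OF x] ox by simp
  then have "p ^ e \<le> p ^ 1" using p1 by (simp add: dvd_imp_le)
  then have "e \<le> 1" using p1 power_le_imp_le_exp by blast
  then show False using e2 by simp
qed

lemma F1: assumes c: "c \<in> Cx" "c \<noteq> \<one>" shows "enh_nbhd G c = Cx"
proof -
  have cG: "c \<in> carrier G" using c CG by blast
  have sub: "Cx \<subseteq> enh_nbhd G c"
  proof
    fix b assume b: "b \<in> Cx"
    then have "b \<in> carrier G" using CG by blast
    then show "b \<in> enh_nbhd G c" using enh_iff[OF fin cG] x c b by blast
  qed
  have "card (enh_nbhd G c) \<le> card Cx" using nG_ge[OF fin cG c(2)] nGle cardC by simp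
  moreover have "finite (enh_nbhd G c)" using enh_sub fin finite_subset by blast
  ultimately show ?thesis using card_seteq[OF _ sub] by simp
qed

lemma F2: assumes y: "y \<in> carrier G" "y \<notin> Cx" and yn: "y [^] (n::nat) \<in> Cx"
  shows "y [^] n = \<one>"
proof (rule ccontr)
  assume ne: "y [^] n \<noteq> \<one>"
  have cG: "y [^] n \<in> carrier G" using y by simp
  have "y [^] n \<in> generate G {y}" using generate_pow_on_finite_carrier[OF fin y(1)] by auto
  moreover have "y \<in> generate G {y}" by (auto intro: generate.incl)
  ultimately have "y \<in> enh_nbhd G (y [^] n)" using enh_iff[OF fin cG y(1)] y by blast
  then have "y \<in> Cx" using F1[OF yn ne] by simp
  then show False using y by simp
qed

lemma notC: assumes c: "c \<in> Cx" and y: "y \<in> carrier G" "y \<notin> Cx" shows "c \<otimes> y \<notin> Cx"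
proof
  assume "c \<otimes> y \<in> Cx"
  then have "inv c \<otimes> (c \<otimes> y) \<in> Cx" using C_mult C_inv c by simp
  moreover have "inv c \<otimes> (c \<otimes> y) = y" using c y CG by auto
  ultimately show False using y by simp
qed

lemma F3: assumes y: "y \<in> carrier G" "y \<notin> Cx" and c: "c \<in> Cx" and com: "c \<otimes> y = y \<otimes> c"
  shows "c [^] p = \<one>"
proof -
  have cG: "c \<in> carrier G" using c CG by blast
  obtain a where a: "ord y = p ^ a" using ord_ppow[OF fin card pr y(1)] by blast
  have "y \<noteq> \<one>" using y oneC by auto
  then have "a \<noteq> 0" using a ord_eq_1[OF y(1)] by auto
  define y' where "y' = y [^] (p ^ (a - 1))"
  have y'G: "y' \<in> carrier G" using y y'_def by simp
  have "p ^ (a - 1) dvd ord y" using a \<open>a \<noteq> 0\<close> by (simp add: le_imp_power_dvd)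
  then have "ord y' = p ^ a div p ^ (a - 1)" using ord_pow[OF y(1)] a p1 y'_def by simp
  also have "\<dots> = p"
  proof -
    obtain a' where a': "a = Suc a'" using \<open>a \<noteq> 0\<close> not0_implies_Suc by blast
    have "p ^ a' > 0" using p1 by simp
    then show ?thesis using a' by simp
  qed
  finally have oy': "ord y' = p" .
  have y'1: "y' [^] p = \<one>" using pow_ord_eq_1[OF y'G] oy' by simp
  have "y' \<noteq> \<one>" using oy' ord_eq_1[OF y'G] p1 by auto
  then have y'C: "y' \<notin> Cx" using F2[OF y] y'_def by blast
  have com': "c \<otimes> y' = y' \<otimes> c" unfolding y'_def using group_commutes_pow[OF com[symmetric] y(1) cG] by simp
  have "(c \<otimes> y') [^] p = c [^] p \<otimes> y' [^] p" using pow_mult_distrib[OF com' cG y'G] .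
  also have "\<dots> = c [^] p" using y'1 cG by simp
  finally have eq: "(c \<otimes> y') [^] p = c [^] p" .
  have "c \<otimes> y' \<notin> Cx" using notC[OF c y'G y'C] .
  moreover have "(c \<otimes> y') [^] p \<in> Cx" using eq C_pow[OF c] by simp
  ultimately have "(c \<otimes> y') [^] p = \<one>" using F2 cG y'G by blast
  then show ?thesis using eq by simp
qed

lemma Nconj: assumes g: "g \<in> Nx" and c: "c \<in> Cx" shows "g \<otimes> c \<otimes> inv g \<in> Cx"
proof -
  obtain i :: int where i: "c = x [^] i" using c generate_pow[OF x] by auto
  have gG: "g \<in> carrier G" using g by simp
  have "g \<otimes> c \<otimes> inv g = (g \<otimes> x \<otimes> inv g) [^] i" using conj_int_pow[OF gG x] i by simp
  then show ?thesis using subgroup_int_pow_closed[OF Csub] g by simp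
qed

lemma Nmult: assumes g: "g \<in> Nx" and h: "h \<in> Nx" shows "g \<otimes> h \<in> Nx"
proof -
  have gG: "g \<in> carrier G" and hG: "h \<in> carrier G" using g h by auto
  have "g \<otimes> h \<otimes> x \<otimes> inv (g \<otimes> h) = g \<otimes> (h \<otimes> x \<otimes> inv h) \<otimes> inv g"
    using gG hG x by (simp add: inv_mult_group m_assoc)
  then show ?thesis using Nconj[OF g] h gG hG by simp
qed

lemma None: "\<one> \<in> Nx" using xC x by simp

lemma Npow: "g \<in> Nx \<Longrightarrow> g [^] (n::nat) \<in> Nx"
proof (induction n)
  case 0 then show ?case using None by simp
next
  case (Suc n)
  then show ?case using Nmult[of "g [^] n" g] by simp
qed

lemma Nsub: "subgroup Nx G"
proof (rule subgroupI)
  show "Nx \<subseteq> carrier G" by auto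
  show "Nx \<noteq> {}" using None by blast
next
  fix g assume g: "g \<in> Nx"
  then have gG: "g \<in> carrier G" by simp
  have o1: "ord g \<ge> 1" using ord_ge_1[OF fin gG] .
  obtain o' where o': "ord g = Suc o'" using o1 not0_implies_Suc by fastforce
  have "g [^] (ord g - 1) \<otimes> g = g [^] ord g"
    using o' gG by simp
  also have "\<dots> = \<one>" using gG by simp
  finally have "inv g = g [^] (ord g - 1)" using inv_equality gG by simp
  then show "inv g \<in> Nx" using Npow[OF g] by simp
next
  fix g h assume "g \<in> Nx" "h \<in> Nx" then show "g \<otimes> h \<in> Nx" using Nmult by blast
qed

lemma xN: "x \<in> Nx" using x xC by (simp add: m_assoc)

end




context pgx begin

lemma stepA:
  assumes nc: "Cx \<noteq> carrier G"
  shows "\<exists>h\<in>Nx. h \<notin> Cx \<and> h [^] p = \<one>"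
proof -
  obtain g where g: "g \<in> carrier G" "g \<notin> Cx" "g \<otimes> x \<otimes> inv g \<in> Cx"
    using fixed_coset[OF fin card pr Csub nc xC ox] by blast
  have gN: "g \<in> Nx" using g by simp
  obtain a where a: "ord g = p ^ a" using ord_ppow[OF fin card pr g(1)] by blast
  have ex: "g [^] (p ^ a) \<in> Cx" using a pow_ord_eq_1[OF g(1)] oneC by simp
  define j where "j = (LEAST j. g [^] (p ^ j) \<in> Cx)"
  have j: "g [^] (p ^ j) \<in> Cx" unfolding j_def by (rule LeastI[of _ a]) (rule ex)
  have jmin: "g [^] (p ^ i) \<notin> Cx" if "i < j" for i using that not_less_Least unfolding j_def by blast
  have "j \<noteq> 0"
  proof
    assume "j = 0"
    then have "g [^] (p ^ j) = g" using g by simp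
    then show False using j g by simp
  qed
  then obtain j' where j': "j = Suc j'" using not0_implies_Suc by blast
  define h where "h = g [^] (p ^ j')"
  have hG: "h \<in> carrier G" using g h_def by simp
  have hC: "h \<notin> Cx" using jmin[of j'] j' h_def by simp
  have "h [^] p = g [^] (p ^ j' * p)" using h_def g nat_pow_pow by simp
  also have "\<dots> = g [^] (p ^ j)" using j' by (simp add: mult.commute)
  finally have hp: "h [^] p \<in> Cx" using j by simp
  have "h [^] p = \<one>" using F2[OF hG hC hp] .
  moreover have "h \<in> Nx" using Npow[OF gN] h_def by simp
  ultimately show ?thesis using hC by blast
qed

lemma p_is_2:
  assumes nc: "Cx \<noteq> carrier G"
  shows "p = 2"
proof (rule ccontr)
  assume p2: "p \<noteq> 2"
  obtain h where h: "h \<in> Nx" "h \<notin> Cx" "h [^] p = \<one>" using stepA[OF nc] by blast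
  have hG: "h \<in> carrier G" using h by simp
  obtain r :: nat where r: "h \<otimes> x \<otimes> inv h = x [^] r" using C_nat h(1) by auto
  define u where "u = x [^] (p ^ (e - 2))"
  have uG: "u \<in> carrier G" using x u_def by simp
  have uC: "u \<in> Cx" using x_pow_C u_def by simp
  have ee: "e = (e - 2) + 2" using e2 by simp
  have pe: "p ^ e = p ^ (e - 2) * p ^ 2" using power_add[of p "e - 2" 2] ee by metis
  have "p ^ (e - 2) dvd ord x" using ox pe by simp
  then have "ord u = p ^ e div p ^ (e - 2)" using ord_pow[OF x] ox p1 u_def by simp
  also have "\<dots> = p ^ 2" using pe p1 by simp
  finally have ou: "ord u = p ^ 2" .
  have hu: "h \<otimes> u \<otimes> inv h = u [^] r"
  proof -
    have "h \<otimes> u \<otimes> inv h = (x [^] r) [^] (p ^ (e - 2))"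
      using conj_nat_pow[OF hG x] r u_def by simp
    also have "\<dots> = u [^] r" using x u_def by (simp add: nat_pow_pow mult.commute)
    finally show ?thesis .
  qed
  have conj_u: "h \<otimes> u [^] (m::nat) \<otimes> inv h = u [^] (r * m)" for m
    using conj_nat_pow[OF hG uG] hu uG by (simp add: nat_pow_pow)
  define v where "v = u [^] p"
  have vG: "v \<in> carrier G" using uG v_def by simp
  have "ord v = p ^ 2 div p" using ord_pow[OF uG, of p] ou p1 v_def by simp
  then have ov: "ord v = p" using p1 by (simp add: power2_eq_square)
  have hv: "h \<otimes> v \<otimes> inv h = v [^] r"
    using conj_u[of p] v_def uG by (simp add: nat_pow_pow mult.commute)
  \<comment> \<open>h centralizes v, by the fixed point lemma\<close>
  define E where "E = generate G {v}"
  define \<sigma> where "\<sigma> w = h \<otimes> w \<otimes> inv h" for w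
  have EG: "E \<subseteq> carrier G" using gen_carrier[OF vG] E_def by simp
  have finE: "finite E" using gen_fin[OF fin vG] E_def by simp
  have Esub: "subgroup E G" using generate_is_subgroup vG E_def by simp
  have clE: "\<sigma> w \<in> E" if w: "w \<in> E" for w
  proof -
    obtain j :: nat where j: "w = v [^] j" using w generate_pow_on_finite_carrier[OF fin vG] E_def by auto
    have "\<sigma> w = (v [^] r) [^] j" using conj_nat_pow[OF hG vG] hv j \<sigma>_def by simp
    moreover have "v [^] r \<in> E" using sub_nat_pow[OF Esub] E_def by (auto intro: generate.incl)
    ultimately show ?thesis using sub_nat_pow[OF Esub] by simp
  qed
  have spow: "(\<sigma> ^^ n) w = h [^] n \<otimes> w \<otimes> inv (h [^] n)" if w: "w \<in> carrier G" for w n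
  proof (induction n)
    case 0 then show ?case using w by simp
  next
    case (Suc n)
    have "(\<sigma> ^^ Suc n) w = \<sigma> ((\<sigma> ^^ n) w)" by simp
    also have "\<dots> = \<sigma> (h [^] n \<otimes> w \<otimes> inv (h [^] n))" using Suc.IH by simp
    also have "\<dots> = h \<otimes> (h [^] n \<otimes> w \<otimes> inv (h [^] n)) \<otimes> inv h" by (simp add: \<sigma>_def)
    also have "\<dots> = (h \<otimes> h [^] n) \<otimes> w \<otimes> inv (h \<otimes> h [^] n)"
      using hG w by (simp add: m_assoc inv_mult_group)
    also have "\<dots> = h [^] Suc n \<otimes> w \<otimes> inv (h [^] Suc n)" by (simp only: nat_pow_Suc2[OF hG])
    finally show ?case .
  qed
  have per: "(\<sigma> ^^ (p ^ 1)) w = w" if w: "w \<in> E" for w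
    using spow[of w p] h(3) w EG by auto
  have dv: "p dvd card (E - {w\<in>E. \<sigma> w = w})" by (rule perm_fix_mod[OF finE clE per pr])
  have cE: "card E = p" using card_gen[OF vG] ov E_def by simp
  have oneE: "\<one> \<in> E" using subgroup.one_closed[OF Esub] .
  have "\<one> \<in> {w\<in>E. \<sigma> w = w}" using oneE \<sigma>_def hG by simp
  then have "E - {w\<in>E. \<sigma> w = w} \<subseteq> E - {\<one>}" by auto
  then have "card (E - {w\<in>E. \<sigma> w = w}) \<le> card (E - {\<one>})" using finE by (simp add: card_mono)
  also have "\<dots> < p" using cE oneE finE p1 by simp
  finally have "card (E - {w\<in>E. \<sigma> w = w}) = 0" using dv by (metis dvd_imp_le neq0_conv not_le)
  then have "E \<subseteq> {w\<in>E. \<sigma> w = w}" using finE by auto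
  moreover have "v \<in> E" using E_def by (auto intro: generate.incl)
  ultimately have "\<sigma> v = v" by auto
  then have vr: "v [^] r = v" using hv \<sigma>_def by simp
  have "v [^] (int r) = v [^] (int 1)" using vr vG by (simp add: int_pow_int)
  then have "int p dvd 1 - int r" using int_pow_eq[OF vG] ov by simp
  then have dvr: "int p dvd int r - 1" by (metis dvd_minus_iff minus_diff_eq)
  have uh: "(u \<otimes> h) [^] n = u [^] (ssq r n) \<otimes> h [^] n" for n
  proof (induction n)
    case 0 then show ?case by simp
  next
    case (Suc n)
    have "(u \<otimes> h) [^] Suc n = (u \<otimes> h) \<otimes> (u \<otimes> h) [^] n"
      using uG hG by (simp only: nat_pow_Suc2 m_closed)
    also have "\<dots> = (u \<otimes> h) \<otimes> (u [^] (ssq r n) \<otimes> h [^] n)" using Suc.IH by simp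
    also have "\<dots> = u \<otimes> (h \<otimes> u [^] (ssq r n) \<otimes> inv h) \<otimes> (h \<otimes> h [^] n)"
      using uG hG by (simp add: m_assoc)
    also have "\<dots> = u \<otimes> u [^] (r * ssq r n) \<otimes> (h \<otimes> h [^] n)"
      using conj_u by simp
    also have "\<dots> = u \<otimes> u [^] (r * ssq r n) \<otimes> h [^] Suc n"
      by (simp only: nat_pow_Suc2[OF hG])
    also have "\<dots> = u [^] (ssq r (Suc n)) \<otimes> h [^] Suc n"
      using nat_pow_Suc2[OF uG, of "r * ssq r n"] by simp
    finally show ?case .
  qed
  have "(u \<otimes> h) [^] p = u [^] (ssq r p)" using uh[of p] h(3) uG by simp
  moreover have "u \<otimes> h \<notin> Cx" using notC[OF uC hG h(2)] .
  moreover have "u [^] (ssq r p) \<in> Cx" using C_pow[OF uC] .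
  ultimately have "u [^] (ssq r p) = \<one>" using F2 uG hG by (metis m_closed)
  then have "p ^ 2 dvd ssq r p" using pow_eq_id[OF uG] ou by simp
  then show False using ssq_nodvd[OF pr p2 dvr] by simp
qed

end




context pgx begin

lemma sq2: "g \<in> carrier G \<Longrightarrow> g [^] (2::nat) = g \<otimes> g"
  by (simp add: numeral_2_eq_2)

lemma x2: "p = 2 \<Longrightarrow> x \<otimes> x \<noteq> \<one>"
  using xp sq2[OF x] by simp

lemma D1:
  assumes p2: "p = 2" and g: "g \<in> Nx" "g \<notin> Cx" and gg: "g \<otimes> g \<in> Cx"
  shows "g \<otimes> g = \<one> \<and> g \<otimes> x \<otimes> inv g = inv x"
proof -
  have gG: "g \<in> carrier G" using g by simp
  have "g [^] (2::nat) \<in> Cx" using gg sq2[OF gG] by simp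
  then have "g [^] (2::nat) = \<one>" by (rule F2[OF gG g(2)])
  then have g1: "g \<otimes> g = \<one>" using sq2[OF gG] by simp
  have ig: "inv g = g" using inv_equality[OF g1 gG gG] .
  have xg: "x \<otimes> g \<notin> Cx" using notC[OF xC gG g(2)] .
  have "x \<otimes> g \<otimes> (x \<otimes> g) = x \<otimes> (g \<otimes> x \<otimes> inv g) \<otimes> (g \<otimes> g)"
    using x gG by (simp add: m_assoc)
  also have "\<dots> \<in> Cx" using C_mult xC g g1 oneC by simp
  finally have "(x \<otimes> g) [^] (2::nat) \<in> Cx" using sq2 x gG by simp
  then have "(x \<otimes> g) [^] (2::nat) = \<one>" using F2 x gG xg by (metis m_closed)
  then have h: "x \<otimes> (g \<otimes> x \<otimes> g) = \<one>" using sq2 x gG by (simp add: m_assoc)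
  have "g \<otimes> x \<otimes> g = inv x \<otimes> (x \<otimes> (g \<otimes> x \<otimes> g))" using x gG by simp
  also have "\<dots> = inv x" using h x by simp
  finally show ?thesis using g1 ig by simp
qed

lemma D2:
  assumes p2: "p = 2" and g: "g \<in> Nx"
  shows "g \<otimes> g \<in> Cx"
proof (rule ccontr)
  assume ng: "g \<otimes> g \<notin> Cx"
  have gG: "g \<in> carrier G" using g by simp
  obtain a where a: "ord g = p ^ a" using ord_ppow[OF fin card pr gG] by blast
  have ex: "g [^] (p ^ a) \<in> Cx" using a pow_ord_eq_1[OF gG] oneC by simp
  define j where "j = (LEAST j. g [^] (p ^ j) \<in> Cx)"
  have j: "g [^] (p ^ j) \<in> Cx" unfolding j_def by (rule LeastI[of _ a]) (rule ex)
  have jmin: "g [^] (p ^ i) \<notin> Cx" if "i < j" for i using that not_less_Least unfolding j_def by blast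
  have j0: "j \<noteq> 0"
  proof
    assume "j = 0"
    then have "g \<in> Cx" using j gG by simp
    then show False using ng C_mult by blast
  qed
  have j1: "j \<noteq> 1"
  proof
    assume "j = 1"
    then have "g [^] (2::nat) \<in> Cx" using j p2 by simp
    then show False using ng sq2[OF gG] by simp
  qed
  obtain j' where j': "j = Suc (Suc j')" using j0 j1 by (cases j; cases "j - 1") auto
  define w where "w = g [^] ((2::nat) ^ j')"
  have wG: "w \<in> carrier G" using gG w_def by simp
  have wN: "w \<in> Nx" using Npow[OF g] w_def by simp
  have ww: "w \<otimes> w = g [^] ((2::nat) ^ Suc j')"
    using w_def gG sq2[OF wG] by (simp add: nat_pow_pow mult.commute)
  have w2C: "w \<otimes> w \<notin> Cx" using jmin[of "Suc j'"] j' ww p2 by simp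
  have w4: "(w \<otimes> w) \<otimes> (w \<otimes> w) \<in> Cx"
  proof -
    have "(w \<otimes> w) \<otimes> (w \<otimes> w) = g [^] ((2::nat) ^ Suc (Suc j'))"
      using ww gG sq2[of "g [^] ((2::nat) ^ Suc j')"] by (simp add: nat_pow_pow mult.commute)
    then show ?thesis using j j' p2 by simp
  qed
  have w2N: "w \<otimes> w \<in> Nx" using Nmult[OF wN wN] .
  have c2: "(w \<otimes> w) \<otimes> x \<otimes> inv (w \<otimes> w) = inv x" using D1[OF p2 w2N w2C w4] by simp
  obtain s :: nat where s: "w \<otimes> x \<otimes> inv w = x [^] s" using C_nat wN by auto
  have "(w \<otimes> w) \<otimes> x \<otimes> inv (w \<otimes> w) = w \<otimes> (w \<otimes> x \<otimes> inv w) \<otimes> inv w"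
    using wG x by (simp add: inv_mult_group m_assoc)
  also have "\<dots> = (w \<otimes> x \<otimes> inv w) [^] s" using s conj_nat_pow[OF wG x] by simp
  also have "\<dots> = x [^] (s * s)" using s x by (simp add: nat_pow_pow)
  finally have "x [^] (s * s) = inv x" using c2 by simp
  then have "x [^] (s * s) \<otimes> x = \<one>" using x by simp
  then have "x [^] Suc (s * s) = \<one>" by simp
  then have "ord x dvd Suc (s * s)" using pow_eq_id[OF x] by blast
  then have "2 ^ e dvd s * s + 1" using ox p2 by simp
  moreover have "(4::nat) dvd 2 ^ e"
  proof -
    have "(2::nat) ^ 2 dvd 2 ^ e" using e2 by (rule le_imp_power_dvd)
    then show ?thesis by simp
  qed
  ultimately have "4 dvd s * s + 1" using dvd_trans by blast
  then show False using four_not_dvd by simp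
qed

lemma D3:
  assumes p2: "p = 2" and g: "g \<in> Nx" "g \<notin> Cx"
  shows "g \<otimes> g = \<one> \<and> g \<otimes> x \<otimes> inv g = inv x"
  using D1[OF p2 g D2[OF p2 g(1)]] .

lemma D4:
  assumes p2: "p = 2" and y: "y \<in> Nx" "y \<notin> Cx" and g: "g \<in> Nx"
  shows "g \<in> Cx \<or> (\<exists>c\<in>Cx. g = c \<otimes> y)"
proof (cases "g \<in> Cx")
  case True then show ?thesis by simp
next
  case False
  have gG: "g \<in> carrier G" and yG: "y \<in> carrier G" using g y by auto
  have dg: "g \<otimes> g = \<one>" "g \<otimes> x \<otimes> inv g = inv x" using D3[OF p2 g False] by auto
  have dy: "y \<otimes> y = \<one>" "y \<otimes> x \<otimes> inv y = inv x" using D3[OF p2 y] by auto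
  define z where "z = g \<otimes> y"
  have zG: "z \<in> carrier G" using gG yG z_def by simp
  have "z \<otimes> x \<otimes> inv z = g \<otimes> (y \<otimes> x \<otimes> inv y) \<otimes> inv g"
    using gG yG x z_def by (simp add: inv_mult_group m_assoc)
  also have "\<dots> = g \<otimes> inv x \<otimes> inv g" using dy by simp
  also have "\<dots> = inv (g \<otimes> x \<otimes> inv g)" using group_hom.hom_inv[OF conj_hom[OF gG] x] by simp
  also have "\<dots> = x" using dg x by simp
  finally have zx: "z \<otimes> x \<otimes> inv z = x" .
  have com: "x \<otimes> z = z \<otimes> x"
  proof -
    have "z \<otimes> x = z \<otimes> x \<otimes> inv z \<otimes> z" using zG x by (simp add: m_assoc)
    then show ?thesis using zx by simp
  qed
  have zC: "z \<in> Cx"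
  proof (rule ccontr)
    assume "z \<notin> Cx"
    then have "x [^] p = \<one>" using F3[OF zG _ xC com] by simp
    then show False using xp by simp
  qed
  have "z \<otimes> y = g" using z_def gG yG dy by (simp add: m_assoc)
  then show ?thesis using zC by metis
qed

lemma D5:
  assumes p2: "p = 2" and y: "y \<in> Nx" "y \<notin> Cx"
  shows "Nx = carrier G"
proof (rule ccontr)
  assume nN: "Nx \<noteq> carrier G"
  obtain g where g: "g \<in> carrier G" "g \<notin> Nx" "g \<otimes> x \<otimes> inv g \<in> Nx"
    using fixed_coset[OF fin card pr Nsub nN xN ox] by blast
  define z where "z = g \<otimes> x \<otimes> inv g"
  have zC: "z \<notin> Cx" using g z_def by auto
  have zz: "z \<otimes> z = \<one>" using D3[OF p2 _ zC] g z_def by simp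
  have "z \<otimes> z = g \<otimes> (x \<otimes> x) \<otimes> inv g" using g x z_def by (simp add: m_assoc)
  then have "g \<otimes> (x \<otimes> x) \<otimes> inv g = \<one>" using zz by simp
  moreover have "x \<otimes> x = inv g \<otimes> (g \<otimes> (x \<otimes> x) \<otimes> inv g) \<otimes> g" using g x by (simp add: m_assoc)
  ultimately have "x \<otimes> x = \<one>" using g by simp
  then show False using x2[OF p2] by simp
qed

theorem only_if:
  assumes nc: "Cx \<noteq> carrier G"
  shows "p = 2 \<and> G \<cong> dihedral_group (2 ^ e)"
proof -
  have p2: "p = 2" using p_is_2[OF nc] .
  obtain y where y: "y \<in> Nx" "y \<notin> Cx" using stepA[OF nc] by blast
  have yG: "y \<in> carrier G" using y by simp
  have dy: "y \<otimes> y = \<one>" "y \<otimes> x \<otimes> inv y = inv x" using D3[OF p2 y] by auto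
  have all: "\<forall>g\<in>carrier G. g \<in> Cx \<or> (\<exists>c\<in>Cx. g = c \<otimes> y)"
    using D4[OF p2 y] D5[OF p2 y] by blast
  have n2: "2 \<le> (2::nat) ^ e" using e2 by (metis le_less_trans less_exp order.strict_implies_order)
  have "G \<cong> dihedral_group (2 ^ e)"
    using dih_to_iso[OF x yG _ n2 y(2) dy(1) dy(2) all] ox p2 by simp
  then show ?thesis using p2 by simp
qed

end




theorem theorem1p1:
  fixes G :: "('a, 'b) monoid_scheme" and p k :: nat
  assumes "group G" and "finite (carrier G)" and "Factorial_Ring.prime p"
    and "card (carrier G) = p ^ k"
    and "carrier G \<noteq> {\<one>\<^bsub>G\<^esub>}"
  shows "n_G G = group_exp G \<longleftrightarrow>
           cyclic_group G \<or> group_exp G = p \<or>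
           (\<exists>m::nat. m \<ge> 1 \<and> G \<cong> dihedral_group (2 ^ m))"
proof -
  interpret group G by fact
  have fin: "finite (carrier G)" and pr: "Factorial_Ring.prime p"
    and card: "card (carrier G) = p ^ k" and nt: "carrier G \<noteq> {\<one>\<^bsub>G\<^esub>}" using assms by auto
  show ?thesis
  proof
    assume eq: "n_G G = group_exp G"
    show "cyclic_group G \<or> group_exp G = p \<or> (\<exists>m::nat. m \<ge> 1 \<and> G \<cong> dihedral_group (2 ^ m))"
    proof (cases "cyclic_group G \<or> group_exp G = p")
      case True then show ?thesis by blast
    next
      case False
      obtain x where x: "x \<in> carrier G" "ord x = group_exp G" "\<forall>a\<in>carrier G. ord a dvd group_exp G"
        using exp_props[OF fin card pr] by blast
      obtain e where ox: "ord x = p ^ e" using ord_ppow[OF fin card pr x(1)] by blast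
      have e0: "e \<noteq> 0"
      proof
        assume "e = 0"
        then have e1: "group_exp G = 1" using x ox by simp
        have "\<forall>a\<in>carrier G. a = \<one>\<^bsub>G\<^esub>"
        proof
          fix a assume a: "a \<in> carrier G"
          then have "ord a = 1" using x(3) e1 by simp
          then show "a = \<one>\<^bsub>G\<^esub>" using ord_eq_1 a by simp
        qed
        then show False using nt one_closed by blast
      qed
      have e1: "e \<noteq> 1" using False x ox by auto
      have e2: "2 \<le> e" using e0 e1 by simp
      have nc: "generate G {x} \<noteq> carrier G"
      proof
        assume "generate G {x} = carrier G"
        then have "cyclic_group G" using cyclic_group generate_range[OF x(1)] x(1) by auto
        then show False using False by simp
      qed
      interpret P: pgx G p k e x
        by unfold_locales (use fin card pr x(1) ox e2 eq x(2) in simp_all)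
      have "G \<cong> dihedral_group (2 ^ e)" using P.only_if[OF nc] by simp
      then show ?thesis using e0 by (metis One_nat_def Suc_leI neq0_conv)
    qed
  next
    assume H: "cyclic_group G \<or> group_exp G = p \<or> (\<exists>m::nat. m \<ge> 1 \<and> G \<cong> dihedral_group (2 ^ m))"
    show "n_G G = group_exp G"
    proof (cases "cyclic_group G")
      case True then show ?thesis using cyclic_case[OF fin card pr nt] by simp
    next
      case False
      show ?thesis
      proof (cases "group_exp G = p")
        case True then show ?thesis using expp_case[OF fin card pr nt] by simp
      next
        case ne: False
        then obtain m :: nat where m: "m \<ge> 1" "G \<cong> dihedral_group (2 ^ m)" using H False by blast
        obtain x y where xy: "x \<in> carrier G" "y \<in> carrier G" "ord x = 2 ^ m" "y \<notin> generate G {x}"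
          "y \<otimes>\<^bsub>G\<^esub> y = \<one>\<^bsub>G\<^esub>" "y \<otimes>\<^bsub>G\<^esub> x \<otimes>\<^bsub>G\<^esub> inv\<^bsub>G\<^esub> y = inv\<^bsub>G\<^esub> x"
          "\<forall>g\<in>carrier G. g \<in> generate G {x} \<or> (\<exists>c\<in>generate G {x}. g = c \<otimes>\<^bsub>G\<^esub> y)"
          using dih_from_iso[OF fin m(1) m(2)] by blast
        have n2: "2 \<le> (2::nat) ^ m" using m(1)
          by (metis power_increasing power_one_right one_le_numeral)
        show ?thesis by (rule dih_case[OF fin card pr nt xy(1) xy(2) xy(3) n2 xy(4) xy(5) xy(6) xy(7)])
      qed
    qed
  qed
qed


end
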